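(* Let $\Delta=\Delta_1+\cdots+\Delta_r\subseteq M_{\mathbb R}$ be a proper centered nef-partition of a reflexive polytope $\Delta$. Call a nonempty subset $I\subseteq\{1,\dots,r\}$ irreducible if $\Delta^I:=\sum_{i\in I}\Delta_i$ contains $0$ in its relative interior and $I$ is minimal (with respect to inclusion) with this property. Then any two distinct irreducible subsets of $\{1,\dots,r\}$ are disjoint.
   Context: $M\cong\mathbb Z^d$, $N$ dual lattice. A reflexive polytope $\Delta\subseteq M_{\mathbb R}$ is a lattice polytope with $0$ in its interior whose polar $\{y:\langle x,y\rangle\ge-1\ \forall x\in\Delta\}$ is a lattice polytope. A centered nef-partition of $\Delta$ is a decomposition $\Delta=\Delta_1+\cdots+\Delta_r$ into lattice polytopes with $0\in\Delta_i$ for all $i$; it is proper if $\dim\Delta_i>0$ for all $i$. *)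

theory Defs
  imports "HOL-Analysis.Analysis"
begin

text \<open>The lattice M = Z^d inside M_R = R^d, modelled as real^'n; the dual lattice N is
  identified with Z^d via the standard inner product.\<close>

definition lattice_point :: "real^'n \<Rightarrow> bool" where
  "lattice_point x \<longleftrightarrow> (\<forall>i. x $ i \<in> \<int>)"

definition lattice_polytope :: "(real^'n) set \<Rightarrow> bool" where
  "lattice_polytope P \<longleftrightarrow>
     (\<exists>S. finite S \<and> S \<noteq> {} \<and> (\<forall>x\<in>S. lattice_point x) \<and> P = convex hull S)"

definition polar :: "(real^'n) set \<Rightarrow> (real^'n) set" where
  "polar P = {y. \<forall>x\<in>P. x \<bullet> y \<ge> -1}"

definition reflexive_polytope :: "(real^'n) set \<Rightarrow> bool" where
  "reflexive_polytope P \<longleftrightarrow>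
     lattice_polytope P \<and> 0 \<in> interior P \<and> lattice_polytope (polar P)"

definition minkowski_sum :: "(nat \<Rightarrow> (real^'n) set) \<Rightarrow> nat set \<Rightarrow> (real^'n) set" where
  "minkowski_sum D I = {x. \<exists>f. (\<forall>i\<in>I. f i \<in> D i) \<and> x = (\<Sum>i\<in>I. f i)}"

definition centered_nef_partition ::
  "(real^'n) set \<Rightarrow> nat \<Rightarrow> (nat \<Rightarrow> (real^'n) set) \<Rightarrow> bool" where
  "centered_nef_partition P r D \<longleftrightarrow>
     P = minkowski_sum D {1..r} \<and>
     (\<forall>i\<in>{1..r}. lattice_polytope (D i) \<and> 0 \<in> D i)"

definition proper_nef_partition ::
  "(real^'n) set \<Rightarrow> nat \<Rightarrow> (nat \<Rightarrow> (real^'n) set) \<Rightarrow> bool" where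
  "proper_nef_partition P r D \<longleftrightarrow>
     centered_nef_partition P r D \<and> (\<forall>i\<in>{1..r}. aff_dim (D i) > 0)"

definition zero_in_relint :: "nat \<Rightarrow> (nat \<Rightarrow> (real^'n) set) \<Rightarrow> nat set \<Rightarrow> bool" where
  "zero_in_relint r D I \<longleftrightarrow>
     I \<noteq> {} \<and> I \<subseteq> {1..r} \<and> 0 \<in> rel_interior (minkowski_sum D I)"

definition irreducible_subset :: "nat \<Rightarrow> (nat \<Rightarrow> (real^'n) set) \<Rightarrow> nat set \<Rightarrow> bool" where
  "irreducible_subset r D I \<longleftrightarrow>
     zero_in_relint r D I \<and> (\<forall>J. J \<subset> I \<longrightarrow> \<not> zero_in_relint r D J)"

end

theory Submission imports Defs begin

lemma ms_convex:
  assumes "\<And>i. i \<in> I \<Longrightarrow> convex (D i)"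
  shows "convex (minkowski_sum D I)"
  unfolding convex_def minkowski_sum_def
proof (clarsimp)
  fix f g :: "nat \<Rightarrow> real^'a" and u v :: real
  assume f: "\<forall>i\<in>I. f i \<in> D i" and g: "\<forall>i\<in>I. g i \<in> D i" and uv: "0 \<le> u" "0 \<le> v" "u + v = 1"
  show "\<exists>h. (\<forall>i\<in>I. h i \<in> D i) \<and> u *\<^sub>R sum f I + v *\<^sub>R sum g I = sum h I"
    apply (rule exI[of _ "\<lambda>i. u *\<^sub>R f i + v *\<^sub>R g i"])
    using f g uv assms unfolding convex_def by (simp add: scaleR_sum_right sum.distrib)
qed


lemma ms_single:
  assumes "finite I" "\<And>i. i \<in> I \<Longrightarrow> 0 \<in> D i" "k \<in> I" "x \<in> D k"
  shows "x \<in> minkowski_sum D I"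
  unfolding minkowski_sum_def
proof (clarsimp, intro exI conjI)
  show "\<forall>i\<in>I. (\<lambda>i. if i = k then x else 0) i \<in> D i" using assms by auto
  show "x = (\<Sum>i\<in>I. (\<lambda>i. if i = k then x else 0) i)" using assms by (simp add: sum.delta)
qed

lemma sum_upd:
  fixes g :: "nat \<Rightarrow> 'b::ab_group_add"
  assumes "finite A" "i \<in> A"
  shows "sum (g(i:=x)) A = sum g A - g i + x"
proof -
  have "sum (g(i:=x)) A = x + sum (g(i:=x)) (A - {i})" using assms by (simp add: sum.remove)
  also have "sum (g(i:=x)) (A - {i}) = sum g (A - {i})" by (rule sum.cong) auto
  also have "sum g (A - {i}) = sum g A - g i" using assms by (simp add: sum.remove)
  finally show ?thesis by (simp add: algebra_simps)
qed

lemma lattice_inner: "lattice_point x \<Longrightarrow> lattice_point y \<Longrightarrow> x \<bullet> y \<in> \<int>"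
  unfolding lattice_point_def inner_vec_def by (auto intro!: Ints_sum Ints_mult)

lemma hull_min_int:
  assumes "finite S" "S \<noteq> {}" "\<forall>s\<in>S. lattice_point s" "lattice_point w"
    "g \<in> convex hull S" "\<forall>x\<in>convex hull S. g \<bullet> w \<le> x \<bullet> w"
  shows "g \<bullet> w \<in> \<int>"
proof -
  obtain s where s: "s \<in> S" "\<forall>t\<in>S. s \<bullet> w \<le> t \<bullet> w"
  proof -
    let ?V = "(\<lambda>t. t \<bullet> w) ` S"
    have "Min ?V \<in> ?V" using assms(1,2) by simp
    then obtain s where "s \<in> S" "s \<bullet> w = Min ?V" by auto
    moreover have "\<forall>t\<in>S. Min ?V \<le> t \<bullet> w" using assms(1) by simp
    ultimately show ?thesis using that by metis
  qed
  have "convex hull S \<subseteq> {x. s \<bullet> w \<le> x \<bullet> w}"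
  proof (rule hull_minimal)
    show "S \<subseteq> {x. s \<bullet> w \<le> x \<bullet> w}" using s by auto
    show "convex {x. s \<bullet> w \<le> x \<bullet> w}" unfolding inner_commute[of _ w] by (rule convex_halfspace_ge)
  qed
  then have "s \<bullet> w \<le> g \<bullet> w" using assms(5) by blast
  moreover have "g \<bullet> w \<le> s \<bullet> w" using assms(6) s(1) hull_subset[of S convex] by blast
  ultimately have "g \<bullet> w = s \<bullet> w" by simp
  moreover have "s \<bullet> w \<in> \<int>" using lattice_inner assms(3,4) s(1) by blast
  ultimately show ?thesis by simp
qed

lemma relint_orth:
  fixes S :: "(real^'n) set"
  assumes "0 \<in> rel_interior S" "\<forall>y\<in>S. 0 \<le> w \<bullet> y" "x \<in> S"
  shows "w \<bullet> x = 0"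
proof -
  obtain e where e: "e > 0" "ball 0 e \<inter> affine hull S \<subseteq> S" and z: "0 \<in> S"
    using assms(1) mem_rel_interior_ball by blast
  define t where "t = e / (2 * (norm x + 1))"
  have n1: "norm x + 1 > 0" by (simp add: add_nonneg_pos)
  have t: "t > 0" unfolding t_def using e n1 by simp
  have "norm ((-t) *\<^sub>R x) < e"
  proof -
    have "norm ((-t) *\<^sub>R x) = t * norm x" using t by simp
    also have "\<dots> \<le> t * (norm x + 1)" using t by simp
    also have "\<dots> = e/2" unfolding t_def using n1 by (simp add: field_simps)
    finally show ?thesis using e by simp
  qed
  moreover have "(-t) *\<^sub>R x \<in> affine hull S"
  proof -
    have "(1 + t) *\<^sub>R 0 + (-t) *\<^sub>R x \<in> affine hull S"
      apply (rule mem_affine[OF affine_affine_hull]) using z assms(3) hull_inc[of _ S affine] by auto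
    then show ?thesis by simp
  qed
  ultimately have "(-t) *\<^sub>R x \<in> S" using e by auto
  then have "0 \<le> w \<bullet> ((-t) *\<^sub>R x)" using assms(2) by blast
  then have "w \<bullet> x \<le> 0" using t by (simp add: mult_le_0_iff)
  then show ?thesis using assms(2,3) by force
qed


lemma int_neg_le: "(x::real) < 0 \<Longrightarrow> x \<in> \<int> \<Longrightarrow> x \<le> -1"
proof -
  assume "x < 0" "x \<in> \<int>"
  then obtain n where n: "x = of_int n" by (auto elim: Ints_cases)
  then have "n < 0" using \<open>x < 0\<close> by simp
  then have "n \<le> -1" by simp
  then show ?thesis using n by simp
qed

theorem proposition6p12:
  fixes P :: "(real^'n) set" and r :: nat and D :: "nat \<Rightarrow> (real^'n) set"
    and I J :: "nat set"
  assumes "reflexive_polytope P"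
    and "proper_nef_partition P r D"
    and "irreducible_subset r D I"
    and "irreducible_subset r D J"
    and "I \<noteq> J"
  shows "I \<inter> J = {}"
proof (rule ccontr)
  assume KN: "I \<inter> J \<noteq> {}"
  define K where "K = I \<inter> J"
  define MS where "MS = minkowski_sum D"
  have zI: "zero_in_relint r D I" and minI: "\<And>J'. J' \<subset> I \<Longrightarrow> \<not> zero_in_relint r D J'"
    using assms(3) unfolding irreducible_subset_def by auto
  have zJ: "zero_in_relint r D J" and minJ: "\<And>J'. J' \<subset> J \<Longrightarrow> \<not> zero_in_relint r D J'"
    using assms(4) unfolding irreducible_subset_def by auto
  have Ir: "I \<subseteq> {1..r}" and I0: "0 \<in> rel_interior (MS I)"
    using zI unfolding zero_in_relint_def MS_def by auto
  have Jr: "J \<subseteq> {1..r}" and J0: "0 \<in> rel_interior (MS J)"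
    using zJ unfolding zero_in_relint_def MS_def by auto
  have Kr: "K \<subseteq> {1..r}" using Ir K_def by auto
  have PMS: "P = MS {1..r}" and Dlp: "\<And>i. i \<in> {1..r} \<Longrightarrow> lattice_polytope (D i)"
    and D0: "\<And>i. i \<in> {1..r} \<Longrightarrow> 0 \<in> D i"
    using assms(2) unfolding proper_nef_partition_def centered_nef_partition_def MS_def by auto
  have Dcvx: "\<And>i. i \<in> {1..r} \<Longrightarrow> convex (D i)"
    using Dlp unfolding lattice_polytope_def by (metis convex_convex_hull)
  obtain SP where SP: "finite SP" "SP \<noteq> {}" "P = convex hull SP"
    using assms(1) unfolding reflexive_polytope_def lattice_polytope_def by auto
  have P0: "0 \<in> interior P" using assms(1) unfolding reflexive_polytope_def by auto
  obtain T where T: "finite T" "T \<noteq> {}" "\<forall>x\<in>T. lattice_point x" "polar P = convex hull T"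
    using assms(1) unfolding reflexive_polytope_def lattice_polytope_def by auto
  have key: "0 \<in> rel_interior (MS K)"
  proof (rule ccontr)
    assume nK: "0 \<notin> rel_interior (MS K)"
    have cK: "convex (MS K)" unfolding MS_def by (rule ms_convex) (use Dcvx Kr in auto)
    have fK: "finite K" using Kr finite_subset by blast
    obtain k0 where k0: "k0 \<in> K" using KN K_def by auto
    have DK0: "\<And>i. i \<in> K \<Longrightarrow> 0 \<in> D i" using D0 Kr by blast
    have zK: "0 \<in> MS K" unfolding MS_def by (rule ms_single[of K D, OF fK DK0 k0 DK0[OF k0]])
    obtain a where a0: "a \<noteq> 0" and aS: "\<And>y. y \<in> MS K \<Longrightarrow> a \<bullet> 0 \<le> a \<bullet> y"
      and aR: "\<And>y. y \<in> rel_interior (MS K) \<Longrightarrow> a \<bullet> 0 < a \<bullet> y"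
      using supporting_hyperplane_rel_boundary[OF cK zK nK] by blast
    have "rel_interior (MS K) \<noteq> {}" using rel_interior_eq_empty[OF cK] zK by auto
    then obtain y0 where y0: "y0 \<in> MS K" "a \<bullet> y0 > 0" using aR rel_interior_subset by fastforce
    have aK: "\<And>k x. k \<in> K \<Longrightarrow> x \<in> D k \<Longrightarrow> 0 \<le> a \<bullet> x"
      using aS ms_single[of K D, OF fK DK0] unfolding MS_def by fastforce
    have claim: "\<And>k x. k \<in> K \<Longrightarrow> x \<in> D k \<Longrightarrow> a \<bullet> x = 0"
    proof -
      have cP: "compact P" using SP by (simp add: compact_convex_hull finite_imp_compact)
      have neP: "P \<noteq> {}" using SP by simp
      obtain p where pP: "p \<in> P" and pmin: "\<And>y. y \<in> P \<Longrightarrow> a \<bullet> p \<le> a \<bullet> y"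
      proof -
        have "continuous_on P (\<lambda>x. a \<bullet> x)" by (intro continuous_intros)
        then show ?thesis using continuous_attains_inf[OF cP neP, of "\<lambda>x. a \<bullet> x"] that by blast
      qed
      define m where "m = a \<bullet> p"
      have m0: "m < 0"
      proof -
        obtain e where e: "e > 0" "ball 0 e \<subseteq> P" using P0 mem_interior by blast
        define x where "x = (- (e / (2 * norm a))) *\<^sub>R a"
        have na: "norm a > 0" using a0 by simp
        have "norm x = e / 2" unfolding x_def using na e by simp
        then have "x \<in> P" using e by auto
        moreover have "a \<bullet> x < 0" unfolding x_def using na e
          by (simp add: dot_square_norm power2_eq_square)
        ultimately show ?thesis using pmin m_def by fastforce
      qed
      define b where "b = (1 / (- m)) *\<^sub>R a"
      have ab: "a = (- m) *\<^sub>R b" unfolding b_def using m0 by simp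
      have "b \<in> polar P" unfolding polar_def
      proof (clarify)
        fix x assume "x \<in> P"
        then have "m \<le> a \<bullet> x" using pmin m_def by simp
        then have "m / (-m) \<le> (a \<bullet> x) / (-m)" using m0 by (simp add: divide_right_mono)
        then show "x \<bullet> b \<ge> -1" unfolding b_def using m0 by (simp add: inner_commute)
      qed
      then obtain \<mu> where mu: "\<forall>w\<in>T. 0 \<le> \<mu> w" "sum \<mu> T = 1" "(\<Sum>w\<in>T. \<mu> w *\<^sub>R w) = b"
        using T(4) convex_hull_finite[OF T(1)] by auto
      have Tpol: "\<And>w x. w \<in> T \<Longrightarrow> x \<in> P \<Longrightarrow> x \<bullet> w \<ge> -1"
        using T(4) hull_subset[of T convex] unfolding polar_def by blast
      obtain g where g: "\<forall>i\<in>{1..r}. g i \<in> D i" "p = sum g {1..r}"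
        using pP PMS unfolding MS_def minkowski_sum_def by auto
      have repl: "\<And>i x. i \<in> {1..r} \<Longrightarrow> x \<in> D i \<Longrightarrow> p - g i + x \<in> P"
      proof -
        fix i x assume i: "i \<in> {1..r}" and x: "x \<in> D i"
        have "sum (g(i:=x)) {1..r} = p - g i + x" using sum_upd[of "{1..r}" i g x] i g(2) by simp
        moreover have "\<forall>j\<in>{1..r}. (g(i:=x)) j \<in> D j" using g(1) x by auto
        ultimately have "\<exists>f. (\<forall>j\<in>{1..r}. f j \<in> D j) \<and> p - g i + x = sum f {1..r}"
          by (intro exI[of _ "g(i:=x)"]) simp
        then show "p - g i + x \<in> P" unfolding PMS MS_def minkowski_sum_def by simp
      qed
      have agK: "\<And>k. k \<in> K \<Longrightarrow> a \<bullet> g k = 0"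
      proof -
        fix k assume k: "k \<in> K"
        then have kr: "k \<in> {1..r}" using Kr by auto
        have "a \<bullet> p \<le> a \<bullet> (p - g k + 0)" using pmin[OF repl[OF kr D0[OF kr]]] .
        then have "a \<bullet> g k \<le> 0" by (simp add: inner_diff_right)
        moreover have "g k \<in> D k" using g(1) kr by blast
        then have "0 \<le> a \<bullet> g k" using aK[OF k] by blast
        ultimately show "a \<bullet> g k = 0" by simp
      qed
      have pw: "\<And>w. w \<in> T \<Longrightarrow> \<mu> w > 0 \<Longrightarrow> p \<bullet> w = -1"
      proof -
        fix w assume w: "w \<in> T" "\<mu> w > 0"
        have "p \<bullet> b = (1 / (- m)) * (p \<bullet> a)" unfolding b_def by simp
        also have "p \<bullet> a = m" unfolding m_def by (rule inner_commute)
        finally have "p \<bullet> b = -1" using m0 by simp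
        moreover have "p \<bullet> b = (\<Sum>v\<in>T. \<mu> v * (p \<bullet> v))" unfolding mu(3)[symmetric] by (simp add: inner_sum_right)
        ultimately have "(\<Sum>v\<in>T. \<mu> v * (p \<bullet> v)) = -1" by simp
        moreover have "(\<Sum>v\<in>T. \<mu> v * (p \<bullet> v + 1)) = (\<Sum>v\<in>T. \<mu> v * (p \<bullet> v)) + sum \<mu> T"
          by (simp add: distrib_left sum.distrib)
        ultimately have s0: "(\<Sum>v\<in>T. \<mu> v * (p \<bullet> v + 1)) = 0" using mu(2) by simp
        have nn: "\<And>v. v \<in> T \<Longrightarrow> 0 \<le> \<mu> v * (p \<bullet> v + 1)"
        proof -
          fix v assume v: "v \<in> T"
          have "0 \<le> p \<bullet> v + 1" using Tpol[OF v pP] by simp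
          then show "0 \<le> \<mu> v * (p \<bullet> v + 1)" using mu(1) v by simp
        qed
        have "\<forall>v\<in>T. \<mu> v * (p \<bullet> v + 1) = 0" using sum_nonneg_eq_0_iff[OF T(1) nn] s0 by simp
        then have "\<mu> w * (p \<bullet> w + 1) = 0" using w(1) by simp
        then show "p \<bullet> w = -1" using w(2) by simp
      qed
      have gmin: "\<And>w i x. w \<in> T \<Longrightarrow> \<mu> w > 0 \<Longrightarrow> i \<in> {1..r} \<Longrightarrow> x \<in> D i \<Longrightarrow> g i \<bullet> w \<le> x \<bullet> w"
      proof -
        fix w i x assume w: "w \<in> T" "\<mu> w > 0" and i: "i \<in> {1..r}" and x: "x \<in> D i"
        have "-1 \<le> (p - g i + x) \<bullet> w" using Tpol[OF w(1) repl[OF i x]] .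
        then show "g i \<bullet> w \<le> x \<bullet> w" using pw[OF w] by (simp add: inner_diff_left inner_add_left)
      qed
      have gint: "\<And>w i. w \<in> T \<Longrightarrow> \<mu> w > 0 \<Longrightarrow> i \<in> {1..r} \<Longrightarrow> g i \<bullet> w \<in> \<int>"
      proof -
        fix w i assume w: "w \<in> T" "\<mu> w > 0" and i: "i \<in> {1..r}"
        obtain S where S: "finite S" "S \<noteq> {}" "\<forall>x\<in>S. lattice_point x" "D i = convex hull S"
          using Dlp[OF i] unfolding lattice_polytope_def by auto
        show "g i \<bullet> w \<in> \<int>"
        proof (rule hull_min_int[OF S(1-3)])
          show "lattice_point w" using T(3) w(1) by blast
          have "g i \<in> D i" using g(1) i by blast
          then show "g i \<in> convex hull S" using S(4) by simp
          show "\<forall>x\<in>convex hull S. g i \<bullet> w \<le> x \<bullet> w" using gmin[OF w i] S(4) by simp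
        qed
      qed
      have gle0: "\<And>w i. w \<in> T \<Longrightarrow> \<mu> w > 0 \<Longrightarrow> i \<in> {1..r} \<Longrightarrow> g i \<bullet> w \<le> 0"
      proof -
        fix w i assume w: "w \<in> T" "\<mu> w > 0" and i: "i \<in> {1..r}"
        show "g i \<bullet> w \<le> 0" using gmin[OF w i D0[OF i]] by simp
      qed
      have wgK: "\<And>w k. w \<in> T \<Longrightarrow> \<mu> w > 0 \<Longrightarrow> k \<in> K \<Longrightarrow> g k \<bullet> w = 0"
      proof -
        fix w k assume w: "w \<in> T" "\<mu> w > 0" and k: "k \<in> K"
        have kr: "k \<in> {1..r}" using k Kr by auto
        have "0 = a \<bullet> g k" using agK[OF k] by simp
        also have "\<dots> = (- m) * (\<Sum>v\<in>T. \<mu> v * (g k \<bullet> v))"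
          unfolding ab mu(3)[symmetric] inner_commute[of _ "g k"] by (simp add: inner_sum_left inner_sum_right)
        finally have "(\<Sum>v\<in>T. \<mu> v * (g k \<bullet> v)) = 0" using m0 by simp
        then have "(\<Sum>v\<in>T. - (\<mu> v * (g k \<bullet> v))) = 0" by (simp add: sum_negf)
        moreover have nn: "\<And>v. v \<in> T \<Longrightarrow> 0 \<le> - (\<mu> v * (g k \<bullet> v))"
        proof -
          fix v assume v: "v \<in> T"
          show "0 \<le> - (\<mu> v * (g k \<bullet> v))"
          proof (cases "\<mu> v > 0")
            case True then show ?thesis using gle0[OF v True kr] by (simp add: mult_nonneg_nonpos)
          next
            case False then have "\<mu> v = 0" using mu(1) v by force
            then show ?thesis by simp
          qed
        qed
        ultimately have "\<forall>v\<in>T. - (\<mu> v * (g k \<bullet> v)) = 0" using sum_nonneg_eq_0_iff[OF T(1) nn] by simp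
        then have "\<mu> w * (g k \<bullet> w) = 0" using w(1) by simp
        then show "g k \<bullet> w = 0" using w(2) by simp
      qed
      have orth: "\<And>w k x. w \<in> T \<Longrightarrow> \<mu> w > 0 \<Longrightarrow> k \<in> K \<Longrightarrow> x \<in> D k \<Longrightarrow> w \<bullet> x = 0"
      proof -
        fix w k x assume w: "w \<in> T" "\<mu> w > 0" and k: "k \<in> K" and x: "x \<in> D k"
        have alt: "(\<forall>i\<in>I. g i \<bullet> w = 0) \<or> (\<forall>i\<in>J. g i \<bullet> w = 0)"
        proof (rule ccontr)
          assume "\<not> ?thesis"
          then obtain i1 i2 where i1: "i1 \<in> I" "g i1 \<bullet> w \<noteq> 0" and i2: "i2 \<in> J" "g i2 \<bullet> w \<noteq> 0" by blast
          have r1: "i1 \<in> {1..r}" "i2 \<in> {1..r}" using i1 i2 Ir Jr by auto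
          have ne: "i1 \<noteq> i2" using wgK[OF w] i1 i2 K_def by blast
          have l1: "g i1 \<bullet> w \<le> -1" and l2: "g i2 \<bullet> w \<le> -1"
          proof -
            have "g i1 \<bullet> w < 0" using gle0[OF w r1(1)] i1(2) by simp
            then show "g i1 \<bullet> w \<le> -1" using gint[OF w r1(1)]
              by (rule int_neg_le)
            have "g i2 \<bullet> w < 0" using gle0[OF w r1(2)] i2(2) by simp
            then show "g i2 \<bullet> w \<le> -1" using gint[OF w r1(2)]
              by (rule int_neg_le)
          qed
          have "p \<bullet> w = (\<Sum>i\<in>{1..r}. g i \<bullet> w)" using g(2) by (simp add: inner_sum_left)
          also have "\<dots> = (\<Sum>i\<in>{i1,i2}. g i \<bullet> w) + (\<Sum>i\<in>{1..r} - {i1,i2}. g i \<bullet> w)"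
            using sum.subset_diff[of "{i1,i2}" "{1..r}" "\<lambda>i. g i \<bullet> w"] r1 by (simp add: add.commute)
          also have "(\<Sum>i\<in>{1..r} - {i1,i2}. g i \<bullet> w) \<le> 0"
            using gle0[OF w] by (intro sum_nonpos) auto
          also have "(\<Sum>i\<in>{i1,i2}. g i \<bullet> w) = g i1 \<bullet> w + g i2 \<bullet> w" using ne by simp
          finally have "p \<bullet> w \<le> -2" using l1 l2 by simp
          then show False using pw[OF w] by simp
        qed
        show "w \<bullet> x = 0"
        proof (cases "\<forall>i\<in>I. g i \<bullet> w = 0")
          case True
          have fI: "finite I" using Ir finite_subset by blast
          have DI0: "\<And>i. i \<in> I \<Longrightarrow> 0 \<in> D i" using D0 Ir by blast
          have "\<forall>y\<in>MS I. 0 \<le> w \<bullet> y"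
          proof
            fix y assume "y \<in> MS I"
            then obtain f where f: "\<forall>i\<in>I. f i \<in> D i" "y = sum f I" unfolding MS_def minkowski_sum_def by auto
            have "\<forall>i\<in>I. 0 \<le> w \<bullet> f i"
              using True gmin[OF w] f(1) Ir by (metis inner_commute subsetD)
            then show "0 \<le> w \<bullet> y" using f(2) by (simp add: inner_sum_right sum_nonneg)
          qed
          moreover have "x \<in> MS I" unfolding MS_def
            by (rule ms_single[of I D, OF fI DI0 _ x]) (use k K_def in auto)
          ultimately show ?thesis using relint_orth[OF I0] by blast
        next
          case False
          then have True: "\<forall>i\<in>J. g i \<bullet> w = 0" using alt by blast
          have fJ: "finite J" using Jr finite_subset by blast
          have DJ0: "\<And>i. i \<in> J \<Longrightarrow> 0 \<in> D i" using D0 Jr by blast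
          have "\<forall>y\<in>MS J. 0 \<le> w \<bullet> y"
          proof
            fix y assume "y \<in> MS J"
            then obtain f where f: "\<forall>i\<in>J. f i \<in> D i" "y = sum f J" unfolding MS_def minkowski_sum_def by auto
            have "\<forall>i\<in>J. 0 \<le> w \<bullet> f i"
              using True gmin[OF w] f(1) Jr by (metis inner_commute subsetD)
            then show "0 \<le> w \<bullet> y" using f(2) by (simp add: inner_sum_right sum_nonneg)
          qed
          moreover have "x \<in> MS J" unfolding MS_def
            by (rule ms_single[of J D, OF fJ DJ0 _ x]) (use k K_def in auto)
          ultimately show ?thesis using relint_orth[OF J0] by blast
        qed
      qed
      fix k x assume k: "k \<in> K" and x: "x \<in> D k"
      have "a \<bullet> x = (- m) * (\<Sum>v\<in>T. \<mu> v * (v \<bullet> x))"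
        unfolding ab mu(3)[symmetric] by (simp add: inner_sum_left)
      also have "(\<Sum>v\<in>T. \<mu> v * (v \<bullet> x)) = 0"
      proof (rule sum.neutral, rule ballI)
        fix v assume v: "v \<in> T"
        show "\<mu> v * (v \<bullet> x) = 0"
        proof (cases "\<mu> v > 0")
          case True then show ?thesis using orth[OF v True k x] by simp
        next
          case False then have "\<mu> v = 0" using mu(1) v by force
          then show ?thesis by simp
        qed
      qed
      finally show "a \<bullet> x = 0" by simp
    qed
    obtain f where f: "\<forall>i\<in>K. f i \<in> D i" "y0 = sum f K" using y0(1) unfolding MS_def minkowski_sum_def by auto
    have "a \<bullet> y0 = (\<Sum>i\<in>K. a \<bullet> f i)" using f(2) by (simp add: inner_sum_right)
    also have "\<dots> = 0" using claim f(1) by simp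
    finally show False using y0(2) by simp
  qed
  have "zero_in_relint r D K" unfolding zero_in_relint_def using KN K_def Kr key MS_def by auto
  then have "K = I" "K = J" using minI minJ K_def by blast+
  then show False using assms(5) by simp
qed

end
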